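(* Consider the input-output system $\dot{\mathbf x}=\mathbf f(\mathbf x)+\hat{\mathbf e}_1 g(u,x_1)$, $u\in J$, satisfying assumption (A0), with output $x_1$, and let $G$ be its J-graph. If $G$ has no positive feedback loop that is disjoint from the node $x_1$, then the system is not quasi-adaptive and does not exhibit biphasic response.
   Context: $\mathcal X\subset\mathbb R^n$, $J\subset\mathbb R$ an interval, $\mathbf f:\mathcal X\to\mathbb R^n$ is $C^1$, every entry $\partial f_i/\partial x_k$ has constant sign (positive, negative, or identically zero) on $\mathcal X$, and $\partial f_i/\partial x_i<0$. $\hat{\mathbf e}_1$ is the first standard basis vector. The control term $g$ is one of: flow, $g(u,x_1)=u$; activation, $g(u,x_1)=(u+k_{\mathrm{on}})(x_T-x_1)-k_{\mathrm{off}}x_1$; inhibition, $g(u,x_1)=k_{\mathrm{on}}(x_T-x_1)-(u+k_{\mathrm{off}})x_1$, with constants $x_T,k_{\mathrm{on}},k_{\mathrm{off}}>0$; in the activation and inhibition cases the state space satisfies $0\le x_1\le x_T$ and every steady state has $0<x_1<x_T$. Write $\mathbf F(\mathbf x,u)=\mathbf f(\mathbf x)+\hat{\mathbf e}_1g(u,x_1)$. Assumption (A0): for every $u_0\in J$ there is $\mathbf x_0\in\mathcal X$ with $\mathbf F(\mathbf x_0,u_0)=\mathbf 0$ and $\frac{\partial\mathbf F}{\partial\mathbf x}(\mathbf x_0,u_0)$ of full rank; by the implicit function theorem this gives continuously differentiable steady-state curves $\mathbf x^*(u)$. With output $x_j$, the system is quasi-adaptive if, along such a curve, $\partial_u x_j^*(u_0)=0$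 for some $u_0\in J$, and exhibits biphasic response if $\partial_u x_j^*(u_1)\,\partial_u x_j^*(u_2)<0$ for some $u_1,u_2\in J$. The J-graph of $\frac{\partial\mathbf f}{\partial\mathbf x}$ is the signed directed graph on nodes $x_1,\ldots,x_n$ with a positive (resp. negative) edge from $x_i$ to $x_k$ iff $\partial f_k/\partial x_i>0$ (resp. $<0$); every node has a negative self-loop. The J-graph $G$ of the input-output system is this graph together with an input edge into $x_1$ (from an external source for flow, or from an extra node $C$ representing the control, positive for activation, negative for inhibition) and an outgoing output edge from the output node. A path is a walk without repeated vertices except possibly first = last, in which case it is a cycle; its sign is the product of its edge signs. A feedback loop is a cycle of length at least two; it is positive if its sign is positive. *)

theory Defs
  imports "HOL-Analysis.Analysis"
begin

datatype control = Flow | Activation real real real | Inhibition real real real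

fun gfun :: "control \<Rightarrow> real \<Rightarrow> real \<Rightarrow> real" where
  "gfun Flow u x1 = u"
| "gfun (Activation xT kon koff) u x1 = (u + kon) * (xT - x1) - koff * x1"
| "gfun (Inhibition xT kon koff) u x1 = kon * (xT - x1) - (u + koff) * x1"

definition admissible_control ::
  "control \<Rightarrow> 'n \<Rightarrow> (real^'n \<Rightarrow> real^'n) \<Rightarrow> (real^'n) set \<Rightarrow> real set \<Rightarrow> bool" where
  "admissible_control c one f X J \<longleftrightarrow>
     (\<forall>xT kon koff. (c = Activation xT kon koff \<or> c = Inhibition xT kon koff) \<longrightarrow>
        xT > 0 \<and> kon > 0 \<and> koff > 0 \<and>
        (\<forall>x\<in>X. 0 \<le> x $ one \<and> x $ one \<le> xT) \<and>
        (\<forall>x\<in>X. \<forall>u\<in>J. f x + axis one (gfun c u (x $ one)) = 0 \<longrightarrow>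
              0 < x $ one \<and> x $ one < xT))"

text \<open>The vector field F(x,u) = f(x) + e_1 g(u,x_1); the node "one" plays the role of x_1.\<close>
definition sysF :: "(real^'n \<Rightarrow> real^'n) \<Rightarrow> control \<Rightarrow> 'n \<Rightarrow> real^'n \<Rightarrow> real \<Rightarrow> real^'n" where
  "sysF f c one x u = f x + axis one (gfun c u (x $ one))"

definition jac_full_rank :: "(real^'n \<Rightarrow> real^'n) \<Rightarrow> control \<Rightarrow> 'n \<Rightarrow> real^'n \<Rightarrow> real \<Rightarrow> bool" where
  "jac_full_rank f c one x u \<longleftrightarrow>
     (\<exists>A :: real^'n^'n. ((\<lambda>y. sysF f c one y u) has_derivative (\<lambda>h. A *v h)) (at x)
                        \<and> rank A = CARD('n))"

definition A0 :: "(real^'n \<Rightarrow> real^'n) \<Rightarrow> control \<Rightarrow> 'n \<Rightarrow> (real^'n) set \<Rightarrow> real set \<Rightarrow> bool" where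
  "A0 f c one X J \<longleftrightarrow>
     (\<forall>u0\<in>J. \<exists>x0\<in>X. sysF f c one x0 u0 = 0 \<and> jac_full_rank f c one x0 u0)"

definition steady_curve ::
  "(real^'n \<Rightarrow> real^'n) \<Rightarrow> control \<Rightarrow> 'n \<Rightarrow> (real^'n) set \<Rightarrow> real set \<Rightarrow>
   real set \<Rightarrow> (real \<Rightarrow> real^'n) \<Rightarrow> (real \<Rightarrow> real^'n) \<Rightarrow> bool" where
  "steady_curve f c one X J I xs xs' \<longleftrightarrow>
     is_interval I \<and> I \<subseteq> J \<and> (\<exists>a\<in>I. \<exists>b\<in>I. a < b) \<and>
     (\<forall>u\<in>I. xs u \<in> X \<and> sysF f c one (xs u) u = 0 \<and> jac_full_rank f c one (xs u) u \<and>
             (xs has_vector_derivative xs' u) (at u within I)) \<and>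
     continuous_on I xs'"

definition quasi_adaptive ::
  "(real^'n \<Rightarrow> real^'n) \<Rightarrow> control \<Rightarrow> 'n \<Rightarrow> (real^'n) set \<Rightarrow> real set \<Rightarrow> 'n \<Rightarrow> bool" where
  "quasi_adaptive f c one X J j \<longleftrightarrow>
     (\<exists>I xs xs'. steady_curve f c one X J I xs xs' \<and> (\<exists>u0\<in>I. xs' u0 $ j = 0))"

definition biphasic ::
  "(real^'n \<Rightarrow> real^'n) \<Rightarrow> control \<Rightarrow> 'n \<Rightarrow> (real^'n) set \<Rightarrow> real set \<Rightarrow> 'n \<Rightarrow> bool" where
  "biphasic f c one X J j \<longleftrightarrow>
     (\<exists>I xs xs'. steady_curve f c one X J I xs xs' \<and>
        (\<exists>u1\<in>I. \<exists>u2\<in>I. xs' u1 $ j * xs' u2 $ j < 0))"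

text \<open>Sign of the edge from node i to node k in the J-graph of the Jacobian Df
  (Df x $ k $ i = partial f_k / partial x_i, constant sign on X).\<close>
definition jsign :: "(real^'n \<Rightarrow> real^'n^'n) \<Rightarrow> (real^'n) set \<Rightarrow> 'n \<Rightarrow> 'n \<Rightarrow> int" where
  "jsign Df X i k =
     (if \<forall>x\<in>X. Df x $ k $ i > 0 then 1
      else if \<forall>x\<in>X. Df x $ k $ i < 0 then -1 else 0)"

definition positive_feedback_loop :: "(real^'n \<Rightarrow> real^'n^'n) \<Rightarrow> (real^'n) set \<Rightarrow> 'n list \<Rightarrow> bool" where
  "positive_feedback_loop Df X vs \<longleftrightarrow>
     distinct vs \<and> length vs \<ge> 2 \<and>
     (\<forall>j<length vs. jsign Df X (vs ! j) (vs ! ((j + 1) mod length vs)) \<noteq> 0) \<and>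
     (\<Prod>j<length vs. jsign Df X (vs ! j) (vs ! ((j + 1) mod length vs))) = 1"

end

theory Submission
  imports Defs "HOL-Combinatorics.Cycles"
begin


lemma sign_cycle_of_list:
  "distinct cs \<Longrightarrow> sign (cycle_of_list cs) = (-1) ^ (length cs - 1)"
proof (induct cs rule: cycle_of_list.induct)
  case (1 i j cs)
  have "sign (cycle_of_list (i # j # cs)) = sign (Transposition.transpose i j) * sign (cycle_of_list (j # cs))"
    by (simp add: sign_compose permutation_swap_id permutation_of_cycle)
  also have "\<dots> = - ((-1) ^ (length cs))" using 1 by (simp add: sign_swap_id)
  finally show ?case by (simp del: cycle_of_list.simps)
qed (auto simp: sign_id)

lemma perm_term_pos:
  fixes w :: "'n::finite \<Rightarrow> 'n \<Rightarrow> real"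
  assumes diag: "\<And>i. w i i > 0"
   and loop: "\<And>vs. distinct vs \<Longrightarrow> length vs \<ge> 2 \<Longrightarrow>
       (\<Prod>j<length vs. w (vs!j) (vs!((j+1) mod length vs))) \<noteq> 0 \<Longrightarrow>
       (-1)^(length vs - 1) * (\<Prod>j<length vs. w (vs!j) (vs!((j+1) mod length vs))) > 0"
  shows "p permutes UNIV \<Longrightarrow> (\<Prod>i\<in>UNIV. w i (p i)) \<noteq> 0 \<Longrightarrow>
         of_int (sign p) * (\<Prod>i\<in>UNIV. w i (p i)) > 0"
proof (induct "card {i. p i \<noteq> i}" arbitrary: p rule: less_induct)
  case less
  show ?case
  proof (cases "p = id")
    case True
    have "(\<Prod>i\<in>UNIV. w i i) > 0" by (rule prod_pos) (use diag in auto)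
    then show ?thesis using True by simp
  next
    case False
    then obtain a where pa: "p a \<noteq> a" by (metis eq_id_iff)
    have perm: "permutation p" unfolding permutation_permutes using less(2) by (intro exI[of _ UNIV]) simp
    define k where "k = least_power p a"
    define vs where "vs = support p a"
    have k2: "k > 1" using least_power_gt_one[OF perm pa] k_def by simp
    have dist: "distinct vs" unfolding vs_def using cycle_of_permutation[OF perm] .
    have len: "length vs = k" by (simp add: vs_def k_def)
    have vsn: "\<And>j. j<k \<Longrightarrow> vs!j = (p^^j) a" by (simp add: vs_def k_def)
    have pk: "(p^^k) a = a" using least_power_of_permutation[OF perm] k_def by simp
    have pvs: "p (vs!j) = vs!((j+1) mod k)" if j: "j<k" for j
    proof (cases "j+1 < k")
      case True
      then have "vs!((j+1) mod k) = (p^^(Suc j)) a" using vsn by simp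
      also have "\<dots> = p ((p^^j) a)" by simp
      finally show ?thesis using vsn[OF j] by simp
    next
      case False
      then have jk: "Suc j = k" using j by simp
      have "p (vs!j) = p ((p^^j) a)" using vsn[OF j] by simp
      also have "\<dots> = (p^^(Suc j)) a" by simp
      also have "\<dots> = a" using jk pk by simp
      also have "\<dots> = vs!0" using vsn[of 0] k2 by simp
      also have "0 = (j+1) mod k" using jk by simp
      finally show ?thesis .
    qed
    have setvs: "set vs = (\<lambda>j. (p^^j) a) ` {..<k}" by (auto simp: vs_def k_def)
    have a_in: "a \<in> set vs" using vsn[of 0] k2 len by (metis nth_mem funpow_0 gr_implies_not0 neq0_conv)
    define q where "q = (\<lambda>y. if y \<in> UNIV - set vs then p y else y)"
    have qperm0: "q permutes (UNIV - set vs)"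
      unfolding q_def vs_def using semidecomposition[OF less(2)] by simp
    then have qperm: "q permutes UNIV" using permutes_subset by blast
    have closed: "p y \<in> set vs \<Longrightarrow> y \<in> set vs" for y
    proof -
      assume "p y \<in> set vs"
      then obtain i where i: "i < k" "p y = (p^^i) a" using setvs by auto
      have "p ((p^^(i + k - 1)) a) = (p^^(i+k)) a"
        using k2 by (metis Suc_diff_1 add_gr_0 funpow.simps(2) o_apply zero_less_one order.strict_trans)
      also have "\<dots> = (p^^i) ((p^^k) a)" by (simp add: funpow_add)
      also have "\<dots> = p y" using pk i by simp
      finally have "y = (p^^(i + k - 1)) a"
        using permutes_inj[OF less(2)] by (metis injD)
      moreover have "(p^^(i + k - 1)) a \<in> set vs"
        using support_set[OF perm, of a] vs_def by auto
      ultimately show ?thesis by simp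
    qed
    have comp: "cycle_of_list vs \<circ> q = p"
    proof
      fix y
      show "(cycle_of_list vs \<circ> q) y = p y"
      proof (cases "y \<in> set vs")
        case True
        then show ?thesis using cycle_restrict[OF perm, of y a] by (simp add: q_def vs_def)
      next
        case False
        then have "p y \<notin> set vs" using closed by blast
        then show ?thesis using False by (simp add: q_def id_outside_supp)
      qed
    qed
    have sgn: "sign p = sign (cycle_of_list vs) * sign q"
      using comp sign_compose[OF permutation_of_cycle, of q vs] qperm
      by (metis finite_class.finite_UNIV permutation_permutes)
    have sgnc: "sign (cycle_of_list vs) = (-1)^(k-1)"
      using sign_cycle_of_list[OF dist] len by simp
    have card: "card {i. q i \<noteq> i} < card {i. p i \<noteq> i}"
    proof (rule psubset_card_mono)
      show "finite {i. p i \<noteq> i}" by simp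
      have "{i. q i \<noteq> i} \<subseteq> {i. p i \<noteq> i} - {a}" using a_in by (auto simp: q_def)
      then show "{i. q i \<noteq> i} \<subset> {i. p i \<noteq> i}" using pa by blast
    qed
    have U: "(UNIV::'n set) = set vs \<union> (UNIV - set vs)" by blast
    have Pp: "(\<Prod>i\<in>UNIV. w i (p i)) = (\<Prod>i\<in>set vs. w i (p i)) * (\<Prod>i\<in>UNIV - set vs. w i (p i))"
      by (subst U, rule prod.union_disjoint) auto
    have Pq: "(\<Prod>i\<in>UNIV. w i (q i)) = (\<Prod>i\<in>set vs. w i i) * (\<Prod>i\<in>UNIV - set vs. w i (p i))"
      by (subst U, subst prod.union_disjoint) (auto simp: q_def)
    have cyc: "(\<Prod>i\<in>set vs. w i (p i)) = (\<Prod>j<k. w (vs!j) (vs!((j+1) mod k)))"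
    proof -
      have "set vs = (\<lambda>j. vs!j) ` {..<k}" using len by (metis atLeast_upt set_map map_nth lessThan_atLeast0)
      moreover have "inj_on (\<lambda>j. vs!j) {..<k}" using inj_on_nth[OF dist] len by auto
      ultimately have "(\<Prod>i\<in>set vs. w i (p i)) = (\<Prod>j<k. w (vs!j) (p (vs!j)))"
        by (simp add: prod.reindex)
      also have "\<dots> = (\<Prod>j<k. w (vs!j) (vs!((j+1) mod k)))"
        by (rule prod.cong) (auto simp: pvs)
      finally show ?thesis .
    qed
    have Dpos: "(\<Prod>i\<in>set vs. w i i) > 0" using diag by (simp add: prod_pos)
    have nz: "(\<Prod>i\<in>set vs. w i (p i)) \<noteq> 0" "(\<Prod>i\<in>UNIV - set vs. w i (p i)) \<noteq> 0"
      using less(3) Pp by auto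
    have IH: "of_int (sign q) * (\<Prod>i\<in>UNIV. w i (q i)) > 0"
    proof -
      have "(\<Prod>i\<in>UNIV. w i (q i)) \<noteq> 0" unfolding Pq using nz(2) Dpos by (metis mult_eq_0_iff less_irrefl)
      then show ?thesis using less(1)[OF card qperm] by blast
    qed
    have L: "(-1)^(k-1) * (\<Prod>j<k. w (vs!j) (vs!((j+1) mod k))) > 0"
      using loop[OF dist] len k2 nz(1) cyc by simp
    have "of_int (sign p) * (\<Prod>i\<in>UNIV. w i (p i)) * (\<Prod>i\<in>set vs. w i i)
        = ((-1)^(k-1) * (\<Prod>j<k. w (vs!j) (vs!((j+1) mod k)))) * (of_int (sign q) * (\<Prod>i\<in>UNIV. w i (q i)))"
      by (simp add: Pp Pq cyc sgn sgnc)
    also have "\<dots> > 0" using L IH by simp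
    finally show ?thesis using Dpos by (simp add: zero_less_mult_iff)
  qed
qed


lemma sgn_prod_real: "finite A \<Longrightarrow> sgn (prod f A) = (\<Prod>x\<in>A. sgn (f x :: real))"
  by (induct A rule: finite_induct) (auto simp: sgn_mult)

lemma det_nonzero_signed:
  fixes M :: "real^'n^'n"
  assumes diag: "\<And>i. M$i$i < 0"
   and loop: "\<And>vs. distinct vs \<Longrightarrow> length vs \<ge> 2 \<Longrightarrow>
       (\<Prod>j<length vs. - M$(vs!j)$(vs!((j+1) mod length vs))) \<noteq> 0 \<Longrightarrow>
       (-1)^(length vs - 1) * (\<Prod>j<length vs. - M$(vs!j)$(vs!((j+1) mod length vs))) > 0"
  shows "det M \<noteq> 0"
proof -
  define w where "w i k = - M$i$k" for i k
  have wd: "\<And>i. w i i > 0" using diag by (simp add: w_def)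
  have wl: "\<And>vs. distinct vs \<Longrightarrow> length vs \<ge> 2 \<Longrightarrow>
       (\<Prod>j<length vs. w (vs!j) (vs!((j+1) mod length vs))) \<noteq> 0 \<Longrightarrow>
       (-1)^(length vs - 1) * (\<Prod>j<length vs. w (vs!j) (vs!((j+1) mod length vs))) > 0"
    unfolding w_def by (rule loop)
  define T where "T p = of_int (sign p) * (\<Prod>i\<in>UNIV. w i (p i))" for p :: "'n \<Rightarrow> 'n"
  have Tnn: "T p \<ge> 0" if "p \<in> {p. p permutes UNIV}" for p
  proof (cases "(\<Prod>i\<in>UNIV. w i (p i)) = 0")
    case True then show ?thesis unfolding T_def by (simp only: mult_zero_right order_refl)
  next
    case False
    then show ?thesis using perm_term_pos[of w p, OF wd wl] that by (simp add: T_def less_imp_le)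
  qed
  have Tid: "T id > 0" unfolding T_def using wd by (simp add: prod_pos)
  have S: "sum T {p. p permutes UNIV} > 0"
    by (rule sum_pos2[of _ id]) (auto simp: finite_permutations permutes_id Tid Tnn)
  have "det M = sum (\<lambda>p. (-1)^CARD('n) * T p) {p. p permutes UNIV}"
    unfolding det_def
  proof (rule sum.cong[OF refl])
    fix p :: "'n \<Rightarrow> 'n"
    have "(\<Prod>i\<in>UNIV. M$i$(p i)) = (\<Prod>i\<in>UNIV. - w i (p i))" by (simp add: w_def)
    also have "\<dots> = (-1)^CARD('n) * (\<Prod>i\<in>UNIV. w i (p i))" by (rule prod_uminus)
    finally show "of_int (sign p) * (\<Prod>i\<in>UNIV. M$i$(p i)) = (-1)^CARD('n) * T p"
      by (simp add: T_def)
  qed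
  also have "\<dots> = (-1)^CARD('n) * sum T {p. p permutes UNIV}" by (simp add: sum_distrib_left)
  finally show ?thesis using S by simp
qed

lemma key_lin:
  fixes D :: "real^'n^'n" and one :: 'n and v :: "real^'n"
  assumes diag: "\<And>i. D$i$i < 0"
   and loopD: "\<And>vs. distinct vs \<Longrightarrow> length vs \<ge> 2 \<Longrightarrow> one \<notin> set vs \<Longrightarrow>
       (\<forall>j<length vs. D$(vs!((j+1) mod length vs))$(vs!j) \<noteq> 0) \<Longrightarrow>
       (\<Prod>j<length vs. sgn (D$(vs!((j+1) mod length vs))$(vs!j))) \<noteq> 1"
   and rows: "\<And>i. i \<noteq> one \<Longrightarrow> (D *v v)$i = 0"
   and v1: "v$one = 0"
  shows "v = 0"
proof -
  define N :: "real^'n^'n" where "N = (\<chi> r s. if r = one then (if s = one then -1 else 0) else D$r$s)"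
  have Nv: "N *v v = 0"
  proof (rule iffD2[OF vec_eq_iff], rule allI)
    fix r
    show "(N *v v)$r = 0$r"
    proof (cases "r = one")
      case True
      have "(N *v v)$r = (\<Sum>s\<in>UNIV. (if s = one then -1 else 0) * v$s)"
        using True by (simp add: N_def matrix_vector_mult_def)
      also have "\<dots> = (\<Sum>s\<in>UNIV. if s = one then - v$s else 0)" by (intro sum.cong) auto
      also have "\<dots> = - v$one" by (simp add: sum.delta)
      finally show ?thesis using v1 by simp
    next
      case False
      have "(N *v v)$r = (D *v v)$r" using False by (simp add: N_def matrix_vector_mult_def)
      then show ?thesis using rows[OF False] by simp
    qed
  qed
  have "det (transpose N) \<noteq> 0"
  proof (rule det_nonzero_signed)
    fix i show "transpose N $ i $ i < 0" using diag by (simp add: transpose_def N_def)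
  next
    fix vs :: "'n list"
    assume dist: "distinct vs" and len: "length vs \<ge> 2"
      and nz: "(\<Prod>j<length vs. - transpose N$(vs!j)$(vs!((j+1) mod length vs))) \<noteq> 0"
    define L where "L = length vs"
    have nzj: "transpose N$(vs!j)$(vs!((j+1) mod L)) \<noteq> 0" if "j < L" for j
      using nz that unfolding L_def by (simp add: prod_zero_iff)
    have succ: "(j+1) mod L < L" for j using len unfolding L_def by (intro mod_less_divisor) linarith
    have neq: "vs!((j+1) mod L) \<noteq> vs!j" if "j < L" for j
    proof
      assume "vs!((j+1) mod L) = vs!j"
      then have "(j+1) mod L = j" using nth_eq_iff_index_eq[OF dist] succ[of j] that L_def by auto
      moreover have "(j+1) mod L \<noteq> j"
        using that len L_def by (cases "j + 1 < L") (auto simp: mod_if)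
      ultimately show False by simp
    qed
    have noone: "one \<notin> set vs"
    proof
      assume "one \<in> set vs"
      then obtain m where m: "m < L" "vs!m = one" by (metis in_set_conv_nth L_def)
      define j where "j = (if m = 0 then L - 1 else m - 1)"
      have j: "j < L" using m len unfolding j_def L_def by (cases "m = 0") simp_all
      have "(j+1) mod L = m" using m len L_def by (auto simp: j_def)
      then have "transpose N$(vs!j)$(vs!((j+1) mod L)) = 0"
        using neq[OF j] m by (simp add: transpose_def N_def)
      then show False using nzj[OF j] by simp
    qed
    have ND: "transpose N$(vs!j)$(vs!((j+1) mod L)) = D$(vs!((j+1) mod L))$(vs!j)" if "j < L" for j
    proof -
      have "vs!((j+1) mod L) \<in> set vs" using succ[of j] L_def by simp
      then have "vs!((j+1) mod L) \<noteq> one" using noone by blast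
      then show ?thesis by (simp add: transpose_def N_def)
    qed
    define x where "x j = D$(vs!((j+1) mod L))$(vs!j)" for j
    have xnz: "\<forall>j<L. x j \<noteq> 0" using nzj ND by (simp add: x_def)
    have sp: "(\<Prod>j<L. sgn (x j)) \<noteq> 1" using loopD[OF dist len noone] xnz unfolding x_def L_def by simp
    have "\<bar>\<Prod>j<L. sgn (x j)\<bar> = 1" using xnz by (simp add: abs_prod abs_sgn_eq)
    then have "(\<Prod>j<L. sgn (x j)) = -1" using sp by (auto simp: abs_if split: if_splits)
    then have "sgn (\<Prod>j<L. x j) = -1" by (simp add: sgn_prod_real)
    then have neg: "(\<Prod>j<L. x j) < 0" by (simp add: sgn_1_neg)
    have "(\<Prod>j<L. - transpose N$(vs!j)$(vs!((j+1) mod L))) = (\<Prod>j<L. - x j)"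
    proof (rule prod.cong[OF refl])
      fix j assume "j \<in> {..<L}"
      then show "- transpose N$(vs!j)$(vs!((j+1) mod L)) = - x j" using ND[of j] unfolding x_def by simp
    qed
    also have "\<dots> = (-1)^L * (\<Prod>j<L. x j)" by (simp add: prod_uminus)
    finally have eq: "(\<Prod>j<L. - transpose N$(vs!j)$(vs!((j+1) mod L))) = (-1)^L * (\<Prod>j<L. x j)" .
    have "(-1::real)^(L - 1) * (-1)^L = -1"
    proof -
      have "L = Suc (L - 1)" using len L_def by simp
      then have "(-1::real)^(L - 1) * (-1)^L = (-1)^(L-1) * (-1)^(L-1) * (-1)"
        by (metis mult.commute mult.left_commute power_Suc)
      also have "\<dots> = -1" by (simp add: power_mult_distrib[symmetric])
      finally show ?thesis .
    qed
    then have "(-1)^(L - 1) * (\<Prod>j<L. - transpose N$(vs!j)$(vs!((j+1) mod L))) = - (\<Prod>j<L. x j)"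
      unfolding eq by (metis mult.assoc mult_minus1)
    then show "(-1)^(length vs - 1) * (\<Prod>j<length vs. - transpose N$(vs!j)$(vs!((j+1) mod length vs))) > 0"
      using neg unfolding L_def by simp
  qed
  then have "det N \<noteq> 0" by simp
  then have "invertible N" by (simp add: invertible_det_nz)
  then obtain B where B: "B ** N = mat 1" unfolding invertible_def by blast
  have "v = (B ** N) *v v" using B by simp
  also have "\<dots> = B *v (N *v v)" by (simp add: matrix_vector_mul_assoc)
  finally show ?thesis using Nv by simp
qed


lemma jsign_sgn:
  fixes Df :: "real^'n \<Rightarrow> real^'n^'n"
  assumes const_sign: "\<forall>i k. (\<forall>x\<in>X. Df x $ i $ k > 0) \<or> (\<forall>x\<in>X. Df x $ i $ k < 0)
                          \<or> (\<forall>x\<in>X. Df x $ i $ k = 0)"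
    and x: "x \<in> X"
  shows "real_of_int (jsign Df X a b) = sgn (Df x $ b $ a)"
proof -
  consider "\<forall>x\<in>X. Df x $ b $ a > 0" | "\<forall>x\<in>X. Df x $ b $ a < 0" | "\<forall>x\<in>X. Df x $ b $ a = 0"
    using const_sign by blast
  then show ?thesis
  proof cases
    case 1 then show ?thesis using x by (simp add: jsign_def)
  next
    case 2
    then have "\<not> (\<forall>x\<in>X. Df x $ b $ a > 0)" using x by force
    then show ?thesis using 2 x by (simp add: jsign_def)
  next
    case 3
    then have "\<not> (\<forall>x\<in>X. Df x $ b $ a > 0)" "\<not> (\<forall>x\<in>X. Df x $ b $ a < 0)" using x by force+
    then show ?thesis using 3 x by (simp add: jsign_def)
  qed
qed

lemma axis_scaleR: "axis i (r::real) = r *\<^sub>R axis i 1"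
  by (simp add: vec_eq_iff axis_def)

theorem theorem10:
  fixes f :: "real^'n \<Rightarrow> real^'n"
    and Df :: "real^'n \<Rightarrow> real^'n^'n"
    and X :: "(real^'n) set" and J :: "real set"
    and c :: control and one :: 'n
  assumes J_interval: "is_interval J"
    and f_deriv: "\<forall>x\<in>X. (f has_derivative (\<lambda>h. Df x *v h)) (at x)"
    and Df_cont: "continuous_on X Df"
    and const_sign: "\<forall>i k. (\<forall>x\<in>X. Df x $ i $ k > 0) \<or> (\<forall>x\<in>X. Df x $ i $ k < 0)
                          \<or> (\<forall>x\<in>X. Df x $ i $ k = 0)"
    and diag_neg: "\<forall>i. \<forall>x\<in>X. Df x $ i $ i < 0"
    and ctrl: "admissible_control c one f X J"
    and a0: "A0 f c one X J"
    and no_loop: "\<not> (\<exists>vs. positive_feedback_loop Df X vs \<and> one \<notin> set vs)"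
  shows "\<not> quasi_adaptive f c one X J one \<and> \<not> biphasic f c one X J one"
proof -
  have kernel: "v = 0" if x: "x \<in> X" and rows: "\<And>i. i \<noteq> one \<Longrightarrow> (Df x *v v)$i = 0"
    and v1: "v$one = 0" for x v
  proof (rule key_lin[of "Df x" one v])
    show "\<And>i. Df x $ i $ i < 0" using diag_neg x by blast
  next
    fix vs :: "'n list"
    assume dist: "distinct vs" and len: "length vs \<ge> 2" and noone: "one \<notin> set vs"
      and nz: "\<forall>j<length vs. Df x$(vs!((j+1) mod length vs))$(vs!j) \<noteq> 0"
    have js: "real_of_int (jsign Df X (vs!j) (vs!((j+1) mod length vs))) = sgn (Df x$(vs!((j+1) mod length vs))$(vs!j))" for j
      using jsign_sgn[OF const_sign x] by blast
    have jnz: "\<forall>j<length vs. jsign Df X (vs ! j) (vs ! ((j + 1) mod length vs)) \<noteq> 0"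
    proof (intro allI impI)
      fix j assume "j < length vs"
      then have "Df x$(vs!((j+1) mod length vs))$(vs!j) \<noteq> 0" using nz by blast
      then have "sgn (Df x$(vs!((j+1) mod length vs))$(vs!j)) \<noteq> 0" by (simp add: sgn_zero_iff)
      then show "jsign Df X (vs ! j) (vs ! ((j + 1) mod length vs)) \<noteq> 0" using js[of j] by auto
    qed
    have "(\<Prod>j<length vs. jsign Df X (vs ! j) (vs ! ((j + 1) mod length vs))) \<noteq> 1"
      using no_loop dist len noone jnz unfolding positive_feedback_loop_def by blast
    then have "real_of_int (\<Prod>j<length vs. jsign Df X (vs ! j) (vs ! ((j + 1) mod length vs))) \<noteq> 1"
      by linarith
    then show "(\<Prod>j<length vs. sgn (Df x$(vs!((j+1) mod length vs))$(vs!j))) \<noteq> 1"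
      unfolding of_int_prod js .
  qed (use rows v1 in auto)
  have nonzero: "xs' u $ one \<noteq> 0" if sc: "steady_curve f c one X J I xs xs'" and u: "u \<in> I" for I xs xs' u
  proof
    assume v1: "xs' u $ one = 0"
    define x where "x = xs u"
    define v where "v = xs' u"
    have I: "is_interval I" "I \<subseteq> J" "\<exists>a\<in>I. \<exists>b\<in>I. a < b" using sc unfolding steady_curve_def by auto
    have xX: "x \<in> X" and ss: "\<And>u'. u' \<in> I \<Longrightarrow> sysF f c one (xs u') u' = 0"
      and dxs: "(xs has_vector_derivative v) (at u within I)"
      using sc u unfolding steady_curve_def x_def v_def by auto
    have uJ: "u \<in> J" using I u by auto
    have ssx: "f x + axis one (gfun c u (x $ one)) = 0" using ss[OF u] unfolding sysF_def x_def .
    have d1: "((\<lambda>u. xs u $ one) has_vector_derivative v $ one) (at u within I)"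
      using bounded_linear.has_vector_derivative[OF bounded_linear_vec_nth dxs] .
    then have d1r: "((\<lambda>u. xs u $ one) has_real_derivative v $ one) (at u within I)"
      by (simp add: has_real_derivative_iff_has_vector_derivative)
    obtain gx gu where gd: "((\<lambda>u. gfun c u (xs u $ one)) has_real_derivative (gu + gx * (v $ one))) (at u within I)"
      and gu: "gu \<noteq> 0"
    proof (cases c)
      case Flow
      have "((\<lambda>u. gfun c u (xs u $ one)) has_real_derivative (1 + 0 * (v $ one))) (at u within I)"
        using Flow by (auto intro!: derivative_eq_intros)
      then show ?thesis using that by fastforce
    next
      case (Activation xT kon koff)
      have "0 < x $ one \<and> x $ one < xT"
        using ctrl xX uJ ssx Activation unfolding admissible_control_def by blast
      then have pos: "xT - xs u $ one \<noteq> 0" unfolding x_def by simp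
      have "((\<lambda>u. gfun c u (xs u $ one)) has_real_derivative
              ((xT - xs u $ one) + (- (u + kon) - koff) * (v $ one))) (at u within I)"
        using Activation by (auto intro!: derivative_eq_intros d1r simp: algebra_simps)
      then show ?thesis using that pos by blast
    next
      case (Inhibition xT kon koff)
      have "0 < x $ one \<and> x $ one < xT"
        using ctrl xX uJ ssx Inhibition unfolding admissible_control_def by blast
      then have pos: "- xs u $ one \<noteq> 0" unfolding x_def by simp
      have "((\<lambda>u. gfun c u (xs u $ one)) has_real_derivative
              ((- xs u $ one) + (- kon - (u + koff)) * (v $ one))) (at u within I)"
        using Inhibition by (auto intro!: derivative_eq_intros d1r simp: algebra_simps)
      then show ?thesis using that pos by blast
    qed
    have gdv: "((\<lambda>u. axis one (gfun c u (xs u $ one))) has_vector_derivative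
                 (gu + gx * (v $ one)) *\<^sub>R axis one 1) (at u within I)"
    proof -
      have eqf: "(\<lambda>u. axis one (gfun c u (xs u $ one))) = (\<lambda>u. gfun c u (xs u $ one) *\<^sub>R axis one (1::real))"
        by (rule ext) (rule axis_scaleR)
      have "((\<lambda>u. gfun c u (xs u $ one) *\<^sub>R axis one (1::real)) has_vector_derivative
              (gfun c u (xs u $ one) *\<^sub>R 0 + (gu + gx * v$one) *\<^sub>R axis one 1)) (at u within I)"
        by (rule has_vector_derivative_scaleR[OF gd has_vector_derivative_const])
      then show ?thesis unfolding eqf by simp
    qed
    have fd: "((\<lambda>u. f (xs u)) has_vector_derivative Df x *v v) (at u within I)"
    proof -
      have "(f has_derivative (\<lambda>h. Df x *v h)) (at (xs u))" using f_deriv xX x_def by blast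
      from has_derivative_compose[OF dxs[unfolded has_vector_derivative_def] this]
      show ?thesis unfolding has_vector_derivative_def by (simp add: matrix_vector_mult_scaleR)
    qed
    have hd: "((\<lambda>u. sysF f c one (xs u) u) has_vector_derivative
               Df x *v v + (gu + gx * (v $ one)) *\<^sub>R axis one 1) (at u within I)"
      unfolding sysF_def by (rule has_vector_derivative_add[OF fd gdv])
    have hd0: "((\<lambda>u. sysF f c one (xs u) u) has_vector_derivative 0) (at u within I)"
      by (rule has_vector_derivative_transform[OF u _ has_vector_derivative_const]) (use ss in auto)
    have lim: "u islimpt I"
    proof (rule connected_imp_perfect)
      show "connected I" using I(1) by (simp add: is_interval_connected)
      show "u \<in> I" by fact
      fix y show "I \<noteq> {y}" using I(3) by auto
    qed
    have ntriv: "at u within I \<noteq> bot" using lim by (simp add: trivial_limit_within)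
    have eq: "Df x *v v + (gu + gx * (v $ one)) *\<^sub>R axis one 1 = 0"
      using vector_derivative_unique_within[OF ntriv hd hd0] .
    have rows: "(Df x *v v)$i = 0" if "i \<noteq> one" for i
    proof -
      have "(Df x *v v + (gu + gx * (v $ one)) *\<^sub>R axis one 1)$i = 0" using eq by simp
      then show ?thesis using that by (simp add: axis_def)
    qed
    have "v = 0" using kernel[OF xX rows] v1 v_def by blast
    then have "(gu *\<^sub>R axis one (1::real)) $ one = 0" using eq by simp
    then show False using gu by simp
  qed
  have notq: "\<not> quasi_adaptive f c one X J one"
    unfolding quasi_adaptive_def using nonzero by blast
  have notb: "\<not> biphasic f c one X J one"
  proof
    assume "biphasic f c one X J one"
    then obtain I xs xs' u1 u2 where sc: "steady_curve f c one X J I xs xs'"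
      and u12: "u1 \<in> I" "u2 \<in> I" and neg: "xs' u1 $ one * xs' u2 $ one < 0"
      unfolding biphasic_def by blast
    have I: "is_interval I" "continuous_on I xs'" using sc unfolding steady_curve_def by auto
    have cont: "continuous_on I (\<lambda>u. xs' u $ one)"
      by (rule continuous_on_component[OF I(2)])
    have conn: "connected ((\<lambda>u. xs' u $ one) ` I)"
      using connected_continuous_image[OF cont] I(1) by (simp add: is_interval_connected)
    then have ivl: "is_interval ((\<lambda>u. xs' u $ one) ` I)" by (simp add: is_interval_connected_1)
    have a: "xs' u1 $ one \<in> (\<lambda>u. xs' u $ one) ` I" "xs' u2 $ one \<in> (\<lambda>u. xs' u $ one) ` I"
      using u12 by auto
    have iv: "\<And>a b y. a \<in> (\<lambda>u. xs' u $ one) ` I \<Longrightarrow> b \<in> (\<lambda>u. xs' u $ one) ` I \<Longrightarrow> a \<le> y \<Longrightarrow> y \<le> b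
               \<Longrightarrow> y \<in> (\<lambda>u. xs' u $ one) ` I"
      using ivl unfolding is_interval_1 by blast
    have "0 \<in> (\<lambda>u. xs' u $ one) ` I"
    proof (cases "xs' u1 $ one < 0")
      case True
      then have "xs' u2 $ one > 0" using neg by (simp add: mult_less_0_iff)
      then show ?thesis using iv[OF a(1) a(2), of 0] True by simp
    next
      case False
      then have "xs' u1 $ one > 0" "xs' u2 $ one < 0" using neg by (auto simp: mult_less_0_iff)
      then show ?thesis using iv[OF a(2) a(1), of 0] by simp
    qed
    then obtain u where "u \<in> I" "xs' u $ one = 0" by auto
    then show False using nonzero[OF sc] by blast
  qed
  show ?thesis using notq notb by blast
qed

end
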